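(* Every $T_1$-space with a regular base at non-isolated points has a point-countable base.
   Context: $I(X)$ is the set of isolated points. A base $\mathcal{B}$ is regular at $x$ if for every neighborhood $U$ of $x$ there is an open $V$ with $x\in V\subset U$ such that $\{B\in\mathcal{B}: B\cap V\neq\emptyset,\ B\not\subset U\}$ is finite; a regular base at non-isolated points is regular at every $x\in X\setminus I(X)$. A base is point-countable if each point lies in at most countably many of its members. *)

theory Defs
  imports "HOL-Analysis.Analysis"
begin

text \<open>A family of sets is a base of the topology X (library idiom: every open set is a union
of members, and members are open).\<close>
definition base_of :: "'a topology \<Rightarrow> 'a set set \<Rightarrow> bool" where
  "base_of X \<B> \<longleftrightarrow> openin X = arbitrary union_of (\<lambda>W. W \<in> \<B>)"

definition isolated_points :: "'a topology \<Rightarrow> 'a set" where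
  "isolated_points X = {x \<in> topspace X. openin X {x}}"

definition nbhd_of :: "'a topology \<Rightarrow> 'a \<Rightarrow> 'a set \<Rightarrow> bool" where
  "nbhd_of X x U \<longleftrightarrow> U \<subseteq> topspace X \<and> (\<exists>W. openin X W \<and> x \<in> W \<and> W \<subseteq> U)"

definition regular_at :: "'a topology \<Rightarrow> 'a set set \<Rightarrow> 'a \<Rightarrow> bool" where
  "regular_at X \<B> x \<longleftrightarrow>
     (\<forall>U. nbhd_of X x U \<longrightarrow>
        (\<exists>V. openin X V \<and> x \<in> V \<and> V \<subseteq> U \<and>
             finite {B \<in> \<B>. B \<inter> V \<noteq> {} \<and> \<not> B \<subseteq> U}))"

definition regular_base_at_nonisolated :: "'a topology \<Rightarrow> 'a set set \<Rightarrow> bool" where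
  "regular_base_at_nonisolated X \<B> \<longleftrightarrow>
     base_of X \<B> \<and> (\<forall>x \<in> topspace X - isolated_points X. regular_at X \<B> x)"

definition point_countable :: "'a topology \<Rightarrow> 'a set set \<Rightarrow> bool" where
  "point_countable X \<B> \<longleftrightarrow> (\<forall>x \<in> topspace X. countable {B \<in> \<B>. x \<in> B})"

end

theory Submission
  imports Defs
begin

lemma countable_cofinite_family:
  assumes H: "\<And>B. B \<in> E \<Longrightarrow> finite {C \<in> E. \<not> C \<subseteq> B}"
  shows "countable E"
proof (rule ccontr)
  assume unc: "\<not> countable E"
  then have "infinite E" using countable_finite by blast
  then obtain A where A: "A \<subseteq> E" "countable A" "infinite A"
    using infinite_countable_subset' by blast
  define S where "S = (\<Union>B\<in>A. {C \<in> E. \<not> C \<subseteq> B})"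
  have "countable S" unfolding S_def
    using A H by (intro countable_UN) (auto intro: countable_finite)
  then have "countable (S \<union> A)" using A by simp
  then have "E - (S \<union> A) \<noteq> {}"
  proof -
    assume c: "countable (S \<union> A)"
    show ?thesis
    proof
      assume "E - (S \<union> A) = {}"
      then have "E \<subseteq> S \<union> A" by blast
      then show False using c unc countable_subset by blast
    qed
  qed
  then obtain C where C: "C \<in> E" "C \<notin> S" "C \<notin> A" by blast
  have sub: "\<forall>B\<in>A. C \<subseteq> B" using C unfolding S_def by blast
  have "finite {B \<in> E. \<not> B \<subseteq> C}" using H C by blast
  then have "finite {B \<in> A. \<not> B \<subseteq> C}"
    by (rule rev_finite_subset) (use A in blast)
  then have "infinite (A - {B \<in> A. \<not> B \<subseteq> C})" using A by auto
  then have "A - {B \<in> A. \<not> B \<subseteq> C} \<noteq> {}" by (metis finite.emptyI)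
  then obtain B where "B \<in> A" "B \<subseteq> C" by blast
  then have "B = C" using sub by blast
  then show False using C \<open>B \<in> A\<close> by blast
qed

theorem mainTheorem17:
  fixes X :: "'a topology" and \<B> :: "'a set set"
  assumes "t1_space X"
    and "regular_base_at_nonisolated X \<B>"
  shows "\<exists>\<C>. base_of X \<C> \<and> point_countable X \<C>"
proof -
  have bB: "openin X = arbitrary union_of (\<lambda>W. W \<in> \<B>)"
   and reg: "\<And>x. x \<in> topspace X - isolated_points X \<Longrightarrow> regular_at X \<B> x"
    using assms(2) unfolding regular_base_at_nonisolated_def base_of_def by auto
  have Bopen: "\<And>B. B \<in> \<B> \<Longrightarrow> openin X B"
   and Bbase: "\<And>U x. openin X U \<Longrightarrow> x \<in> U \<Longrightarrow> \<exists>B. B \<in> \<B> \<and> x \<in> B \<and> B \<subseteq> U"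
    using bB unfolding openin_topology_base_unique by blast+
  define N where "N = topspace X - isolated_points X"
  define P where "P = (\<lambda>z B V. openin X V \<and> z \<in> V \<and> V \<subseteq> B \<and>
             finite {B' \<in> \<B>. B' \<inter> V \<noteq> {} \<and> \<not> B' \<subseteq> B})"
  define V where "V = (\<lambda>z B. SOME V. P z B V)"
  have PV: "P z B (V z B)" if "z \<in> N" "B \<in> \<B>" "z \<in> B" for z B
  proof -
    have "nbhd_of X z B" unfolding nbhd_of_def
      using Bopen[OF that(2)] that(3) openin_subset by blast
    then have "\<exists>W. P z B W" using reg[of z] that(1) unfolding N_def regular_at_def P_def
      by blast
    then show ?thesis unfolding V_def by (rule someI_ex)
  qed
  define f where "f = (\<lambda>B. \<Union>{V z B | z. z \<in> N \<and> z \<in> B})"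
  define \<C> where "\<C> = (\<lambda>x. {x}) ` isolated_points X \<union> f ` \<B>"
  have fsub: "f B \<subseteq> B" if "B \<in> \<B>" for B
    using PV[OF _ that] unfolding f_def P_def by blast
  have fopen: "openin X (f B)" if "B \<in> \<B>" for B
    using PV[OF _ that] unfolding f_def P_def by blast
  have base: "base_of X \<C>"
    unfolding base_of_def openin_topology_base_unique
  proof (intro conjI allI impI)
    fix W assume "W \<in> \<C>"
    then show "openin X W" unfolding \<C>_def isolated_points_def using fopen by auto
  next
    fix U x assume ux: "openin X U \<and> x \<in> U"
    show "\<exists>W. W \<in> \<C> \<and> x \<in> W \<and> W \<subseteq> U"
    proof (cases "x \<in> isolated_points X")
      case True
      then show ?thesis using ux unfolding \<C>_def by auto
    next
      case False
      then have xN: "x \<in> N" unfolding N_def using ux openin_subset by blast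
      obtain B where B: "B \<in> \<B>" "x \<in> B" "B \<subseteq> U" using Bbase ux by blast
      have "x \<in> V x B" using PV[OF xN B(1,2)] unfolding P_def by blast
      then have "x \<in> f B" unfolding f_def using xN B by blast
      then show ?thesis using B fsub unfolding \<C>_def by blast
    qed
  qed
  have pc: "point_countable X \<C>"
    unfolding point_countable_def
  proof
    fix p assume "p \<in> topspace X"
    define E where "E = {B \<in> \<B>. p \<in> f B}"
    have "countable E"
    proof (rule countable_cofinite_family)
      fix B assume "B \<in> E"
      then have B: "B \<in> \<B>" "p \<in> f B" unfolding E_def by auto
      then obtain z where z: "z \<in> N" "z \<in> B" "p \<in> V z B" unfolding f_def by blast
      have fin: "finite {B' \<in> \<B>. B' \<inter> V z B \<noteq> {} \<and> \<not> B' \<subseteq> B}"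
        using PV[OF z(1) B(1) z(2)] unfolding P_def by blast
      show "finite {C \<in> E. \<not> C \<subseteq> B}"
        apply (rule rev_finite_subset[OF fin])
        using z(3) fsub unfolding E_def by blast
    qed
    have "{C \<in> \<C>. p \<in> C} \<subseteq> {{p}} \<union> f ` E"
      unfolding \<C>_def E_def by auto
    moreover have "countable ({{p}} \<union> f ` E)" using \<open>countable E\<close> by simp
    ultimately show "countable {C \<in> \<C>. p \<in> C}" using countable_subset by blast
  qed
  show ?thesis using base pc by blast
qed

end
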